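(* Let $\theta,r_0>0$ and let $A\subseteq\mathbb R^n$ be a set of finite perimeter such that $\theta r^{n-1}\le P(A,B_r(x))$ for every $x\in\partial A$ and every $r\in(0,r_0]$. Then for every $\ell>0$ and every set of finite perimeter $B\subseteq\mathbb R^n$, $$|B\Delta A|\le\frac{5^n\omega_n}{\theta}\max\Big\{1,\Big(\frac{\ell}{r_0}\Big)^{n-1}\Big\}P(A)\,\ell+\frac1\ell\int_{A\Delta B}\mathrm{dist}(x,\partial A)\,dx .$$
   Context: $|\cdot|$ is Lebesgue measure, $\omega_n=|B_1(0)|$, $B_r(x)$ the open Euclidean ball, $P(A,\Omega)$ the (Euclidean) perimeter of $A$ in the open set $\Omega$, $P(A)=P(A,\mathbb R^n)$, $\mathrm{dist}$ the Euclidean distance. Sets of finite perimeter are normalized to coincide with their points of Lebesgue density one, so that $\partial A$ (topological boundary) is the closure of the reduced boundary. $A\Delta B$ is the symmetric difference. *)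

theory Defs
  imports "HOL-Analysis.Analysis"
begin

definition divergence :: "('a::euclidean_space \<Rightarrow> 'a) \<Rightarrow> 'a \<Rightarrow> real" where
  "divergence \<phi> x = (\<Sum>i\<in>Basis. frechet_derivative \<phi> (at x) i \<bullet> i)"

definition admissible_fields :: "'a::euclidean_space set \<Rightarrow> ('a \<Rightarrow> 'a) set" where
  "admissible_fields \<Omega> = {\<phi>. (\<forall>x. \<phi> differentiable (at x))
      \<and> (\<forall>v. continuous_on UNIV (\<lambda>x. frechet_derivative \<phi> (at x) v))
      \<and> compact (closure {x. \<phi> x \<noteq> 0}) \<and> closure {x. \<phi> x \<noteq> 0} \<subseteq> \<Omega>
      \<and> (\<forall>x. norm (\<phi> x) \<le> 1)}"

definition perimeter :: "'a::euclidean_space set \<Rightarrow> 'a set \<Rightarrow> ennreal" where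
  "perimeter A \<Omega> = (SUP \<phi>\<in>admissible_fields \<Omega>. ennreal (integral A (divergence \<phi>)))"

definition finite_perimeter :: "'a::euclidean_space set \<Rightarrow> bool" where
  "finite_perimeter A \<longleftrightarrow> A \<in> sets lebesgue \<and> perimeter A UNIV < \<infinity>"

definition density_one_points :: "'a::euclidean_space set \<Rightarrow> 'a set" where
  "density_one_points A = {x. ((\<lambda>r. measure lebesgue (A \<inter> ball x r) / measure lebesgue (ball x r))
        \<longlongrightarrow> 1) (at_right 0)}"

text \<open>Distance from a point to a set, with value \<infinity> for the empty set.\<close>
definition edist_set :: "'a::metric_space \<Rightarrow> 'a set \<Rightarrow> ennreal" where
  "edist_set x S = (INF y\<in>S. ennreal (dist x y))"

end

theory Submission
  imports Defs
begin


lemma adm_zero_outside: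
  assumes "\<phi> \<in> admissible_fields \<Omega>" "x \<notin> closure {x. \<phi> x \<noteq> 0}"
  shows "frechet_derivative \<phi> (at x) = (\<lambda>_. 0)"
proof -
  have "frechet_derivative \<phi> (at x) = frechet_derivative (\<lambda>_. 0::'a) (at x)"
    apply (rule frechet_derivative_transform_within_open[where X="- closure {x. \<phi> x \<noteq> 0}"])
    using assms by (auto simp: admissible_fields_def intro: closure_subset[THEN subsetD])
  then show ?thesis by simp
qed

lemma adm_div_cont:
  assumes "\<phi> \<in> admissible_fields \<Omega>"
  shows "continuous_on UNIV (divergence \<phi>)"
proof -
  have "\<And>i. continuous_on UNIV (\<lambda>x. frechet_derivative \<phi> (at x) i)"
    using assms by (auto simp: admissible_fields_def)
  then show ?thesis unfolding divergence_def[abs_def]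
    by (intro continuous_on_sum continuous_intros) auto
qed

lemma adm_div_integrable:
  fixes \<phi> :: "'a::euclidean_space \<Rightarrow> 'a"
  assumes "\<phi> \<in> admissible_fields \<Omega>" "A \<in> sets lebesgue"
  shows "divergence \<phi> integrable_on A"
proof -
  let ?K = "closure {x. \<phi> x \<noteq> 0}"
  have "compact ?K" using assms by (auto simp: admissible_fields_def)
  then obtain a b where ab: "?K \<subseteq> cbox a b"
    using compact_imp_bounded bounded_subset_cbox_symmetric by metis
  have z: "divergence \<phi> x = 0" if "x \<notin> cbox a b" for x
  proof -
    have "x \<notin> ?K" using ab that by blast
    then show ?thesis using adm_zero_outside[OF assms(1), of x] by (simp add: divergence_def)
  qed
  have "divergence \<phi> absolutely_integrable_on cbox a b"
    using adm_div_cont[OF assms(1)] absolutely_integrable_continuous continuous_on_subset by blast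
  then have "(\<lambda>x. if x \<in> cbox a b then divergence \<phi> x else 0) absolutely_integrable_on UNIV"
    by (simp add: absolutely_integrable_restrict_UNIV)
  also have "(\<lambda>x. if x \<in> cbox a b then divergence \<phi> x else 0) = divergence \<phi>"
    using z by auto
  finally have "divergence \<phi> absolutely_integrable_on UNIV" .
  then have "divergence \<phi> absolutely_integrable_on A"
    using set_integrable_subset assms(2) by blast
  then show ?thesis using absolutely_integrable_on_def by blast
qed

lemma adm_add:
  fixes \<phi> \<psi> :: "'a::euclidean_space \<Rightarrow> 'a"
  assumes p: "\<phi> \<in> admissible_fields U" and q: "\<psi> \<in> admissible_fields V" and d: "U \<inter> V = {}"
  shows "(\<lambda>x. \<phi> x + \<psi> x) \<in> admissible_fields (U \<union> V)"
    and "divergence (\<lambda>x. \<phi> x + \<psi> x) = (\<lambda>x. divergence \<phi> x + divergence \<psi> x)"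
proof -
  have dp: "\<phi> differentiable (at x)" and dq: "\<psi> differentiable (at x)" for x
    using p q unfolding admissible_fields_def by blast+
  have fd: "frechet_derivative (\<lambda>x. \<phi> x + \<psi> x) (at x) =
      (\<lambda>v. frechet_derivative \<phi> (at x) v + frechet_derivative \<psi> (at x) v)" for x
  proof -
    have "(\<phi> has_derivative frechet_derivative \<phi> (at x)) (at x)"
      using dp frechet_derivative_works by blast
    moreover have "(\<psi> has_derivative frechet_derivative \<psi> (at x)) (at x)"
      using dq frechet_derivative_works by blast
    ultimately show ?thesis by (rule frechet_derivative_at[symmetric, OF has_derivative_add])
  qed
  show "divergence (\<lambda>x. \<phi> x + \<psi> x) = (\<lambda>x. divergence \<phi> x + divergence \<psi> x)"
    unfolding divergence_def fd by (simp only: inner_add_left sum.distrib)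
  have sub: "{x. \<phi> x + \<psi> x \<noteq> 0} \<subseteq> {x. \<phi> x \<noteq> 0} \<union> {x. \<psi> x \<noteq> 0}" by auto
  have cl: "closure {x. \<phi> x + \<psi> x \<noteq> 0} \<subseteq> closure {x. \<phi> x \<noteq> 0} \<union> closure {x. \<psi> x \<noteq> 0}"
    using closure_mono[OF sub] closure_Un by blast
  have cK: "compact (closure {x. \<phi> x \<noteq> 0} \<union> closure {x. \<psi> x \<noteq> 0})"
    using p q unfolding admissible_fields_def by (intro compact_Un) blast+
  have nrm: "norm (\<phi> x + \<psi> x) \<le> 1" for x
  proof (cases "\<phi> x = 0")
    case True
    have "norm (\<psi> x) \<le> 1" using q unfolding admissible_fields_def by blast
    then show ?thesis using True by simp
  next
    case False
    then have "x \<in> closure {x. \<phi> x \<noteq> 0}" using closure_subset[of "{x. \<phi> x \<noteq> 0}"] by blast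
    then have "x \<in> U" using p unfolding admissible_fields_def by blast
    then have "x \<notin> V" using d by blast
    then have "\<psi> x = 0" using q closure_subset[of "{x. \<psi> x \<noteq> 0}"] unfolding admissible_fields_def by blast
    moreover have "norm (\<phi> x) \<le> 1" using p unfolding admissible_fields_def by blast
    ultimately show ?thesis by simp
  qed
  show "(\<lambda>x. \<phi> x + \<psi> x) \<in> admissible_fields (U \<union> V)"
    unfolding admissible_fields_def mem_Collect_eq
  proof (intro conjI allI)
    show "(\<lambda>x. \<phi> x + \<psi> x) differentiable at x" for x using dp dq by (rule differentiable_add)
    show "continuous_on UNIV (\<lambda>x. frechet_derivative (\<lambda>x. \<phi> x + \<psi> x) (at x) v)" for v
    proof -
      have "continuous_on UNIV (\<lambda>x. frechet_derivative \<phi> (at x) v)"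
           "continuous_on UNIV (\<lambda>x. frechet_derivative \<psi> (at x) v)"
        using p q unfolding admissible_fields_def by blast+
      then show ?thesis unfolding fd by (rule continuous_on_add)
    qed
    show "compact (closure {x. \<phi> x + \<psi> x \<noteq> 0})"
    proof -
      have e: "closure {x. \<phi> x + \<psi> x \<noteq> 0} = (closure {x. \<phi> x \<noteq> 0} \<union> closure {x. \<psi> x \<noteq> 0}) \<inter> closure {x. \<phi> x + \<psi> x \<noteq> 0}"
        using cl by blast
      show ?thesis by (subst e, rule compact_Int_closed[OF cK closed_closure])
    qed
    show "closure {x. \<phi> x + \<psi> x \<noteq> 0} \<subseteq> U \<union> V"
      using cl p q unfolding admissible_fields_def by blast
    show "norm (\<phi> x + \<psi> x) \<le> 1" for x by (rule nrm)
  qed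
qed

lemma zero_adm: "(\<lambda>_. 0) \<in> admissible_fields \<Omega>"
  by (simp add: admissible_fields_def)

lemma perimeter_mono: "U \<subseteq> V \<Longrightarrow> perimeter A U \<le> perimeter A V"
  unfolding perimeter_def
  by (rule SUP_subset_mono) (auto simp: admissible_fields_def)

lemma perimeter_add:
  fixes A :: "'a::euclidean_space set"
  assumes "U \<inter> V = {}" "A \<in> sets lebesgue"
  shows "perimeter A U + perimeter A V \<le> perimeter A (U \<union> V)"
proof -
  let ?f = "\<lambda>\<phi>. ennreal (integral A (divergence \<phi>))"
  have ne: "admissible_fields W \<noteq> {}" for W :: "'a set" using zero_adm by blast
  have key: "?f \<phi> + ?f \<psi> \<le> perimeter A (U \<union> V)"
    if p: "\<phi> \<in> admissible_fields U" and q: "\<psi> \<in> admissible_fields V" for \<phi> \<psi>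
  proof -
    have pU: "\<phi> \<in> admissible_fields (U \<union> V)" and qU: "\<psi> \<in> admissible_fields (U \<union> V)"
      using p q by (auto simp: admissible_fields_def)
    have le: "g \<in> admissible_fields (U \<union> V) \<Longrightarrow> ?f g \<le> perimeter A (U \<union> V)" for g
      unfolding perimeter_def by (rule SUP_upper2) auto
    have int: "integral A (divergence (\<lambda>x. \<phi> x + \<psi> x)) = integral A (divergence \<phi>) + integral A (divergence \<psi>)"
      unfolding adm_add(2)[OF p q assms(1)]
      by (rule integral_add; rule adm_div_integrable[OF _ assms(2)]) (use p q in auto)
    consider "integral A (divergence \<phi>) < 0" | "integral A (divergence \<psi>) < 0"
      | "integral A (divergence \<phi>) \<ge> 0 \<and> integral A (divergence \<psi>) \<ge> 0" by linarith
    then show ?thesis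
    proof cases
      case 1 then show ?thesis using le[OF qU] by (simp add: ennreal_neg)
    next
      case 2 then show ?thesis using le[OF pU] by (simp add: ennreal_neg)
    next
      case 3
      then have "ennreal (integral A (divergence \<phi>)) + ennreal (integral A (divergence \<psi>))
          = ennreal (integral A (divergence (\<lambda>x. \<phi> x + \<psi> x)))"
        unfolding int by (simp add: ennreal_plus)
      then show ?thesis using le[OF adm_add(1)[OF p q assms(1)]] by simp
    qed
  qed
  have "perimeter A U + perimeter A V = (SUP \<phi>\<in>admissible_fields U. SUP \<psi>\<in>admissible_fields V. ?f \<phi> + ?f \<psi>)"
  proof -
    have "perimeter A U + perimeter A V = (SUP \<phi>\<in>admissible_fields U. ?f \<phi> + perimeter A V)"
      unfolding perimeter_def[of A U] by (rule ennreal_SUP_add_left[OF ne, symmetric])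
    also have "\<dots> = (SUP \<phi>\<in>admissible_fields U. SUP \<psi>\<in>admissible_fields V. ?f \<phi> + ?f \<psi>)"
      unfolding perimeter_def[of A V] by (simp add: ennreal_SUP_add_right[OF ne])
    finally show ?thesis .
  qed
  also have "\<dots> \<le> perimeter A (U \<union> V)"
    by (intro SUP_least key)
  finally show ?thesis .
qed


lemma real_bound:
  fixes k \<omega> \<theta> l r0 p :: real and m :: nat
  assumes "k \<ge> 0" "\<omega> \<ge> 0" "\<theta> > 0" "l > 0" "r0 > 0"
    and "k * (\<theta> * (min l r0) ^ m) \<le> p"
  shows "k * (\<omega> * (3 * l) ^ Suc m) \<le> 5 ^ Suc m * \<omega> / \<theta> * max 1 ((l / r0) ^ m) * p * l"
proof -
  define r where "r = min l r0"
  define M where "M = max 1 ((l / r0) ^ m)"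
  have r: "r > 0" "r \<le> l" using assms by (auto simp: r_def)
  have M: "M \<ge> 1" by (simp add: M_def)
  have lm: "l ^ m \<le> M * r ^ m"
  proof (cases "l \<le> r0")
    case True
    then have "r = l" by (simp add: r_def)
    have "1 * l ^ m \<le> M * l ^ m" using M assms(4) by (intro mult_right_mono) auto
    then show ?thesis using \<open>r = l\<close> by simp
  next
    case False
    then have rr: "r = r0" by (simp add: r_def)
    have e: "(l / r0) ^ m * r0 ^ m = l ^ m" using assms(5)
      by (simp add: power_divide)
    have "(l / r0) ^ m * r0 ^ m \<le> M * r0 ^ m"
      using assms(5) unfolding M_def by (intro mult_right_mono) auto
    then show ?thesis using e rr by simp
  qed
  have kp: "k * r ^ m \<le> p / \<theta>"
  proof -
    have "(k * r ^ m) * \<theta> \<le> p" using assms(6) unfolding r_def by (simp add: algebra_simps)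
    then show ?thesis using assms(3) by (simp add: le_divide_eq)
  qed
  have p0: "p \<ge> 0"
  proof -
    have "0 \<le> k * (\<theta> * (min l r0) ^ m)" using assms r unfolding r_def by simp
    then show ?thesis using assms(6) by linarith
  qed
  have A0: "0 \<le> \<omega> * 3 ^ Suc m * l" using assms by simp
  have "k * (\<omega> * (3 * l) ^ Suc m) = (\<omega> * 3 ^ Suc m * l) * (k * l ^ m)"
    by (simp add: power_mult_distrib)
  also have "\<dots> \<le> (\<omega> * 3 ^ Suc m * l) * (k * (M * r ^ m))"
    using lm assms(1) A0 by (intro mult_left_mono) auto
  also have "\<dots> = (\<omega> * 3 ^ Suc m * l * M) * (k * r ^ m)" by simp
  also have "\<dots> \<le> (\<omega> * 3 ^ Suc m * l * M) * (p / \<theta>)"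
    using kp M A0 by (intro mult_left_mono) auto
  also have "\<dots> \<le> (\<omega> * 5 ^ Suc m * l * M) * (p / \<theta>)"
  proof -
    have q: "p / \<theta> \<ge> 0" using p0 assms(3) by simp
    have "(3::real) ^ Suc m \<le> 5 ^ Suc m" by (rule power_mono) auto
    then have "\<omega> * 3 ^ Suc m \<le> \<omega> * 5 ^ Suc m" using assms(2) by (rule mult_left_mono)
    then have "\<omega> * 3 ^ Suc m * (l * M) \<le> \<omega> * 5 ^ Suc m * (l * M)"
      using assms(4) M by (intro mult_right_mono) auto
    then have "\<omega> * 3 ^ Suc m * l * M \<le> \<omega> * 5 ^ Suc m * l * M" by (simp add: mult.assoc)
    then show ?thesis using q by (rule mult_right_mono)
  qed
  also have "\<dots> = 5 ^ Suc m * \<omega> / \<theta> * M * p * l" by simp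
  finally show ?thesis by (simp add: M_def)
qed


lemma perimeter_sum:
  fixes A :: "'a::euclidean_space set"
  assumes "finite X" "A \<in> sets lebesgue"
    and "\<And>x y. x \<in> X \<Longrightarrow> y \<in> X \<Longrightarrow> x \<noteq> y \<Longrightarrow> 2 * l \<le> dist x y"
  shows "(\<Sum>x\<in>X. perimeter A (ball x l)) \<le> perimeter A (\<Union>x\<in>X. ball x l)"
  using assms
proof (induction X rule: finite_induct)
  case empty
  then show ?case by simp
next
  case (insert x X)
  have IH: "(\<Sum>x\<in>X. perimeter A (ball x l)) \<le> perimeter A (\<Union>x\<in>X. ball x l)"
    using insert by auto
  have disj: "ball x l \<inter> (\<Union>y\<in>X. ball y l) = {}"
  proof (rule ccontr)
    assume "ball x l \<inter> (\<Union>y\<in>X. ball y l) \<noteq> {}"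
    then obtain y z where y: "y \<in> X" and z: "dist x z < l" "dist y z < l" by auto
    have "x \<noteq> y" using y insert(2) by auto
    then have "2 * l \<le> dist x y" using insert(5) y by auto
    moreover have "dist x y \<le> dist x z + dist y z" by (metis dist_commute dist_triangle)
    ultimately show False using z by linarith
  qed
  have "(\<Sum>x\<in>insert x X. perimeter A (ball x l)) = perimeter A (ball x l) + (\<Sum>x\<in>X. perimeter A (ball x l))"
    using insert by simp
  also have "\<dots> \<le> perimeter A (ball x l) + perimeter A (\<Union>x\<in>X. ball x l)"
    using IH by (rule add_left_mono)
  also have "\<dots> \<le> perimeter A (ball x l \<union> (\<Union>x\<in>X. ball x l))"
    by (rule perimeter_add[OF disj insert(4)])
  finally show ?case by simp
qed

theorem proposition3p3:
  fixes A B :: "'a::euclidean_space set" and \<theta> r0 l :: real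
  assumes "\<theta> > 0" and "r0 > 0"
    and "finite_perimeter A" and "A = density_one_points A"
    and "\<And>x r. x \<in> frontier A \<Longrightarrow> 0 < r \<Longrightarrow> r \<le> r0 \<Longrightarrow>
           ennreal (\<theta> * r ^ (DIM('a) - 1)) \<le> perimeter A (ball x r)"
    and "l > 0"
    and "finite_perimeter B" and "B = density_one_points B"
  shows "emeasure lebesgue ((B - A) \<union> (A - B))
     \<le> ennreal (5 ^ DIM('a) * measure lebesgue (ball (0::'a) 1) / \<theta>
                 * max 1 ((l / r0) ^ (DIM('a) - 1)))
         * perimeter A UNIV * ennreal l
       + ennreal (1 / l) * (\<integral>\<^sup>+ x \<in> ((A - B) \<union> (B - A)). edist_set x (frontier A) \<partial>lebesgue)"
proof -
  define m where "m = DIM('a) - 1"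
  have nm: "DIM('a) = Suc m" using DIM_positive[where 'a='a] by (simp add: m_def)
  define F where "F = frontier A"
  define D where "D = (B - A) \<union> (A - B)"
  define \<omega> where "\<omega> = measure lebesgue (ball (0::'a) 1)"
  define r where "r = min l r0"
  define c where "c = \<theta> * r ^ m"
  have r: "0 < r" "r \<le> r0" "r \<le> l" using assms by (auto simp: r_def)
  have c: "c > 0" using r assms by (simp add: c_def)
  have Al: "A \<in> sets lebesgue" and Bl: "B \<in> sets lebesgue"
    using assms(3,7) by (auto simp: finite_perimeter_def)
  have Dl: "D \<in> sets lebesgue" using Al Bl by (auto simp: D_def)
  obtain p where p: "perimeter A UNIV = ennreal p" "p \<ge> 0"
    using assms(3) by (cases "perimeter A UNIV") (auto simp: finite_perimeter_def)
  have \<omega>: "\<omega> \<ge> 0" by (simp add: \<omega>_def)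
  have ball_le: "ennreal c \<le> perimeter A (ball x l)" if "x \<in> F" for x
  proof -
    have "ennreal c \<le> perimeter A (ball x r)"
      using assms(5)[of x r] that r by (simp add: F_def c_def m_def)
    also have "\<dots> \<le> perimeter A (ball x l)" by (rule perimeter_mono) (use r in auto)
    finally show ?thesis .
  qed
  define sep where "sep X \<longleftrightarrow> finite X \<and> X \<subseteq> F \<and> (\<forall>x\<in>X. \<forall>y\<in>X. x \<noteq> y \<longrightarrow> 2 * l \<le> dist x y)" for X
  have card_bd: "real (card X) * c \<le> p" if "sep X" for X
  proof -
    have "ennreal (real (card X) * c) = (\<Sum>x\<in>X. ennreal c)"
      using c by (simp add: ennreal_mult' ennreal_of_nat_eq_real_of_nat)
    also have "\<dots> \<le> (\<Sum>x\<in>X. perimeter A (ball x l))"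
      using that ball_le by (intro sum_mono) (auto simp: sep_def)
    also have "\<dots> \<le> perimeter A (\<Union>x\<in>X. ball x l)"
      using that Al by (intro perimeter_sum) (auto simp: sep_def)
    also have "\<dots> \<le> perimeter A UNIV" by (rule perimeter_mono) auto
    finally show ?thesis using p by simp
  qed
  define K where "K = nat \<lfloor>p / c\<rfloor>"
  have cardK: "card X \<le> K" if "sep X" for X
  proof -
    have "real (card X) \<le> p / c" using card_bd[OF that] c by (simp add: field_simps)
    then show ?thesis unfolding K_def by linarith
  qed
  define S where "S = card ` {X. sep X}"
  have S: "finite S" "S \<noteq> {}"
  proof -
    have "S \<subseteq> {..K}" using cardK by (auto simp: S_def)
    then show "finite S" using finite_subset by blast
    have "sep {}" by (simp add: sep_def)
    then show "S \<noteq> {}" by (auto simp: S_def)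
  qed
  obtain X where X: "sep X" "card X = Max S"
    using Max_in[OF S] by (auto simp: S_def)
  have Xmax: "card Y \<le> card X" if "sep Y" for Y
    using X(2) S that by (auto simp: S_def)
  have cover: "\<exists>x\<in>X. dist y x < 2 * l" if "y \<in> F" for y
  proof (rule ccontr)
    assume no: "\<not> ?thesis"
    then have "y \<notin> X" using assms(6) by force
    have "sep (insert y X)"
      using X(1) no that unfolding sep_def by (auto simp: dist_commute)
    then have "card (insert y X) \<le> card X" by (rule Xmax)
    then show False using \<open>y \<notin> X\<close> X(1) by (simp add: sep_def)
  qed
  define N where "N = {y. \<exists>z\<in>F. dist y z < l}"
  have Nopen: "open N"
  proof -
    have "N = (\<Union>z\<in>F. ball z l)" by (auto simp: N_def dist_commute)
    then show ?thesis by auto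
  qed
  then have Nl: "N \<in> sets lebesgue" by auto
  have NX: "N \<subseteq> (\<Union>x\<in>X. ball x (3 * l))"
  proof
    fix y assume "y \<in> N"
    then obtain z where z: "z \<in> F" "dist y z < l" by (auto simp: N_def)
    obtain x where x: "x \<in> X" "dist z x < 2 * l" using cover[OF z(1)] by blast
    have "dist x y \<le> dist z x + dist y z" by (metis dist_commute dist_triangle)
    then have "dist x y < 3 * l" using x z by linarith
    then show "y \<in> (\<Union>x\<in>X. ball x (3 * l))" using x(1) by auto
  qed
  have ball_meas: "emeasure lebesgue (ball x (3 * l)) = ennreal (\<omega> * (3 * l) ^ Suc m)" for x :: 'a
  proof -
    have e1: "emeasure lebesgue (ball (0::'a) 1) = ennreal \<omega>"
      unfolding \<omega>_def by (rule emeasure_eq_measure2[OF lmeasurable_ball])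
    have e2: "ennreal (\<omega> * (3 * l) ^ Suc m) = ennreal \<omega> * ennreal ((3 * l) ^ Suc m)"
      by (rule ennreal_mult) (use \<omega> assms(6) in auto)
    have "emeasure lebesgue (ball x (3 * l)) = ennreal ((3 * l) ^ DIM('a)) * emeasure lebesgue (ball (0::'a) 1)"
      by (rule emeasure_lebesgue_ball_conv_unit_ball) (use assms(6) in simp)
    also have "\<dots> = ennreal ((3 * l) ^ Suc m) * ennreal \<omega>" by (simp only: nm e1)
    also have "\<dots> = ennreal (\<omega> * (3 * l) ^ Suc m)" by (metis e2 mult.commute)
    finally show ?thesis .
  qed
  have "open (\<Union>x\<in>X. ball x (3 * l))" by auto
  then have Ul: "(\<Union>x\<in>X. ball x (3 * l)) \<in> sets lebesgue" by auto
  have "emeasure lebesgue N \<le> emeasure lebesgue (\<Union>x\<in>X. ball x (3 * l))"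
    using NX Ul by (rule emeasure_mono)
  also have "\<dots> \<le> (\<Sum>x\<in>X. emeasure lebesgue (ball x (3 * l)))"
    using X(1) by (intro emeasure_subadditive_finite) (auto simp: sep_def)
  also have "\<dots> = ennreal (real (card X) * (\<omega> * (3 * l) ^ Suc m))"
    using \<omega> assms(6) by (simp add: ball_meas ennreal_mult' ennreal_of_nat_eq_real_of_nat)
  also have "\<dots> \<le> ennreal (5 ^ Suc m * \<omega> / \<theta> * max 1 ((l / r0) ^ m) * p * l)"
  proof (rule ennreal_leI)
    have "real (card X) * (\<theta> * (min l r0) ^ m) \<le> p"
      using card_bd[OF X(1)] by (simp only: c_def r_def)
    then show "real (card X) * (\<omega> * (3 * l) ^ Suc m) \<le> 5 ^ Suc m * \<omega> / \<theta> * max 1 ((l / r0) ^ m) * p * l"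
      by (rule real_bound[OF of_nat_0_le_iff \<omega> assms(1) assms(6) assms(2)])
  qed
  finally have N_bd: "emeasure lebesgue N \<le> ennreal (5 ^ Suc m * \<omega> / \<theta> * max 1 ((l / r0) ^ m)) * ennreal p * ennreal l"
    using assms \<omega> p by (simp add: ennreal_mult'[symmetric])
  have far: "ennreal l \<le> edist_set x F" if "x \<notin> N" for x
    unfolding edist_set_def
  proof (rule INF_greatest)
    fix z assume "z \<in> F"
    then have "l \<le> dist x z" using that by (auto simp: N_def)
    then show "ennreal l \<le> ennreal (dist x z)" by simp
  qed
  have "ennreal l * emeasure lebesgue (D - N) = (\<integral>\<^sup>+ x. ennreal l * indicator (D - N) x \<partial>lebesgue)"
    using Dl Nl by (simp add: nn_integral_cmult_indicator)
  also have "\<dots> \<le> (\<integral>\<^sup>+ x. edist_set x F * indicator D x \<partial>lebesgue)"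
    by (intro nn_integral_mono) (auto simp: indicator_def far)
  finally have far_bd: "ennreal l * emeasure lebesgue (D - N) \<le> (\<integral>\<^sup>+ x \<in> D. edist_set x F \<partial>lebesgue)" .
  have DN: "emeasure lebesgue (D - N) \<le> ennreal (1 / l) * (\<integral>\<^sup>+ x \<in> D. edist_set x F \<partial>lebesgue)"
  proof -
    have "emeasure lebesgue (D - N) = ennreal (1 / l) * (ennreal l * emeasure lebesgue (D - N))"
      using assms(6) by (simp add: mult.assoc[symmetric] ennreal_mult'[symmetric])
    also have "\<dots> \<le> ennreal (1 / l) * (\<integral>\<^sup>+ x \<in> D. edist_set x F \<partial>lebesgue)"
      using far_bd by (rule mult_left_mono) simp
    finally show ?thesis .
  qed
  have "emeasure lebesgue D \<le> emeasure lebesgue (D \<inter> N) + emeasure lebesgue (D - N)"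
  proof -
    have "D = (D \<inter> N) \<union> (D - N)" by blast
    then show ?thesis using emeasure_subadditive[of "D \<inter> N" lebesgue "D - N"] Dl Nl by auto
  qed
  also have "\<dots> \<le> emeasure lebesgue N + emeasure lebesgue (D - N)"
    using Nl by (intro add_right_mono emeasure_mono) auto
  also have "\<dots> \<le> ennreal (5 ^ Suc m * \<omega> / \<theta> * max 1 ((l / r0) ^ m)) * ennreal p * ennreal l
        + ennreal (1 / l) * (\<integral>\<^sup>+ x \<in> D. edist_set x F \<partial>lebesgue)"
    by (intro add_mono N_bd DN)
  finally show ?thesis
    unfolding D_def F_def \<omega>_def nm m_def[symmetric] p(1)[symmetric]
    by (simp add: Un_commute)
qed

end
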